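(* Let $f,g:\mathbb{R}^n\to\mathbb{R}$ be probability density functions, regarded as elements of the normed space $(\mathcal{L}_1(\mathbb{R}^n),\|\cdot\|_{\mathcal{L}_1})$. Then $\mathcal{M}^g\subset\mathcal{L}_1$ and $g_k\star f\in\mathcal{L}_1$ for every $k\in(0,\infty)$. Furthermore, for every $k\in(0,\infty)$ there exists a sequence $\{h_m^g\}_{m=1}^\infty\subset\mathcal{M}^g$ such that \[ \lim_{m\to\infty}\left\Vert g_k\star f-h_m^g\right\Vert_{\mathcal{L}_1}=0 . \]
   Context: A probability density function (PDF) is a measurable $g\ge 0$ with $\int g\,\mathrm{d}\lambda=1$ ($\lambda$ Lebesgue measure). For $k>0$, $g_k(x)=k^n g(kx)$ is the dilate of $g$, and $(g_k\star f)(x)=\int g_k(x-y)f(y)\,\mathrm{d}\lambda(y)$. The class $\mathcal{M}^g=\bigcup_{m\in\mathbb{N}}\mathcal{M}^g_m$, where $\mathcal{M}^{g}_m=\{ \sum_{i=1}^{m}c_{i}\sigma_{i}^{-n}g((\cdot-\mu_{i})/\sigma_{i}) :\mu_{i}\in\mathbb{R}^{n},\ \sigma_{i}>0,\ c_i\ge0,\ \sum_i c_i=1\}$ is the set of $m$-component location-scale finite mixtures of $g$. *)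

theory Defs
  imports "HOL-Analysis.Analysis"
begin

definition is_pdf :: "('a::euclidean_space \<Rightarrow> real) \<Rightarrow> bool" where
  "is_pdf g \<longleftrightarrow> g \<in> borel_measurable lborel \<and> (\<forall>x. 0 \<le> g x)
     \<and> (\<integral>\<^sup>+ x. ennreal (g x) \<partial>lborel) = 1"

definition dilate :: "real \<Rightarrow> ('a::euclidean_space \<Rightarrow> real) \<Rightarrow> 'a \<Rightarrow> real" where
  "dilate k g x = k ^ DIM('a) * g (k *\<^sub>R x)"

definition conv :: "('a::euclidean_space \<Rightarrow> real) \<Rightarrow> ('a \<Rightarrow> real) \<Rightarrow> 'a \<Rightarrow> real" where
  "conv g f x = (\<integral> y. g (x - y) * f y \<partial>lborel)"

definition mixtures_m :: "nat \<Rightarrow> ('a::euclidean_space \<Rightarrow> real) \<Rightarrow> ('a \<Rightarrow> real) set" where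
  "mixtures_m m g = {(\<lambda>x. \<Sum>i<m. c i * inverse (\<sigma> i) ^ DIM('a) * g (inverse (\<sigma> i) *\<^sub>R (x - \<mu> i)))
     | c \<sigma> \<mu>. (\<forall>i<m. 0 < \<sigma> i \<and> 0 \<le> c i) \<and> (\<Sum>i<m. c i) = 1}"

definition mixtures :: "('a::euclidean_space \<Rightarrow> real) \<Rightarrow> ('a \<Rightarrow> real) set" where
  "mixtures g = (\<Union>m. mixtures_m m g)"

end

theory Submission
  imports Defs
begin

lemma emeasure_lborel_translate:
  fixes t :: "'a::euclidean_space"
  assumes "B \<in> sets borel"
  shows "emeasure lborel {x. x + t \<in> B} = emeasure lborel B"
proof -
  have "emeasure lborel B = emeasure (distr lborel borel ((+) t)) B"
    by (simp add: lborel_distr_plus)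
  also have "\<dots> = emeasure lborel ((+) t -` B)"
    using assms by (simp add: emeasure_distr)
  also have "(+) t -` B = {x. x + t \<in> B}" by (auto simp: add.commute)
  finally show ?thesis by simp
qed

lemma nn_integral_lborel_translate:
  fixes t :: "'a::euclidean_space"
  assumes [measurable]: "u \<in> borel_measurable borel"
  shows "(\<integral>\<^sup>+x. u (x + t) \<partial>lborel) = (\<integral>\<^sup>+x. u x \<partial>lborel)"
proof -
  have "(\<integral>\<^sup>+x. u x \<partial>lborel) = (\<integral>\<^sup>+x. u x \<partial>distr lborel borel ((+) t))"
    by (simp add: lborel_distr_plus)
  also have "\<dots> = (\<integral>\<^sup>+x. u (t + x) \<partial>lborel)"
    by (subst nn_integral_distr) auto
  finally show ?thesis by (simp add: add.commute)
qed

lemma approx_compact_open: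
  fixes A :: "'a::euclidean_space set"
  assumes A[measurable]: "A \<in> sets borel" and fin: "emeasure lborel A < \<infinity>" and e: "e > 0"
  obtains K U where "compact K" "open U" "K \<subseteq> A" "A \<subseteq> U"
    "emeasure lborel (A - K) < ennreal e" "emeasure lborel (U - A) < ennreal e"
proof -
  obtain U where U: "open U" "A \<subseteq> U" "emeasure lborel (U - A) < e"
    using outer_regular_lborel[OF A e] by blast
  have e2: "e/2 > 0" using e by simp
  have cA: "- A \<in> sets borel" using A by auto
  obtain V where V: "open V" "- A \<subseteq> V" "emeasure lborel (V - - A) < e/2"
    using outer_regular_lborel[OF cA e2] by blast
  define B where "B n = A - ball (0::'a) (real n)" for n
  have "(\<lambda>n. emeasure lborel (B n)) \<longlonglongrightarrow> emeasure lborel (\<Inter>n. B n)"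
  proof (rule Lim_emeasure_decseq)
    show "range B \<subseteq> sets lborel" unfolding B_def by auto
    show "decseq B" unfolding B_def decseq_def
      by (auto simp: subset_eq)
    show "emeasure lborel (B i) \<noteq> \<infinity>" for i
    proof -
      have "emeasure lborel (B i) \<le> emeasure lborel A"
        unfolding B_def by (rule emeasure_mono) auto
      thus ?thesis using fin by auto
    qed
  qed
  moreover have "(\<Inter>n. B n) = {}"
  proof -
    have "x \<notin> B (nat \<lceil>norm x + 1\<rceil>)" for x :: 'a
      unfolding B_def by auto linarith
    thus ?thesis by blast
  qed
  ultimately have "(\<lambda>n. emeasure lborel (B n)) \<longlonglongrightarrow> 0" by simp
  then have "eventually (\<lambda>n. emeasure lborel (B n) < ennreal (e/2)) sequentially"
    by (rule order_tendstoD(2)) (use e2 in simp)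
  then obtain n where n: "emeasure lborel (B n) < e/2"
    by (auto simp: eventually_sequentially)
  define K where "K = - V \<inter> cball 0 (real n)"
  have "compact K" unfolding K_def
    using V(1) by (intro closed_Int_compact) auto
  moreover have "K \<subseteq> A" unfolding K_def using V by auto
  moreover have "emeasure lborel (A - K) < e"
  proof -
    have "A - K \<subseteq> (V - - A) \<union> B n" unfolding K_def B_def by auto
    hence "emeasure lborel (A - K) \<le> emeasure lborel ((V - - A) \<union> B n)"
      by (intro emeasure_mono) (auto simp: B_def V)
    also have "\<dots> \<le> emeasure lborel (V - - A) + emeasure lborel (B n)"
      by (intro emeasure_subadditive) (auto simp: B_def V)
    also have "\<dots> < ennreal (e/2) + ennreal (e/2)"
      using V(3) n by (intro add_strict_mono) auto  
    also have "\<dots> = ennreal e" using e by (simp flip: ennreal_plus)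
    finally show ?thesis .
  qed
  ultimately show ?thesis using that U by blast
qed


definition Tr :: "('a::euclidean_space \<Rightarrow> real) \<Rightarrow> 'a \<Rightarrow> ennreal" where
  "Tr f t = (\<integral>\<^sup>+x. ennreal \<bar>f (x + t) - f x\<bar> \<partial>lborel)"

definition TC :: "('a::euclidean_space \<Rightarrow> real) \<Rightarrow> bool" where
  "TC f \<longleftrightarrow> (\<forall>e>0. \<exists>d>0. \<forall>t. norm t < d \<longrightarrow> Tr f t < ennreal e)"

lemma TC_indicator:
  fixes A :: "'a::euclidean_space set"
  assumes A[measurable]: "A \<in> sets borel" and fin: "emeasure lborel A < \<infinity>"
  shows "TC (\<lambda>x. indicator A x *\<^sub>R c)"
  unfolding TC_def
proof (intro allI impI)
  fix e :: real assume e: "e > 0"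
  define e' where "e' = e / (4 * (\<bar>c\<bar> + 1))"
  have e': "e' > 0" unfolding e'_def using e by (simp add: add_pos_nonneg)
  obtain K U where KU: "compact K" "open U" "K \<subseteq> A" "A \<subseteq> U"
    "emeasure lborel (A - K) < ennreal e'" "emeasure lborel (U - A) < ennreal e'"
    using approx_compact_open[OF A fin e'] by blast
  have [measurable]: "U \<in> sets borel" "K \<in> sets borel"
    using KU by (auto intro: borel_open borel_compact)
  have "K \<inter> - U = {}" using KU by auto
  then obtain d where d: "d > 0" "\<forall>x\<in>K. \<forall>y\<in>- U. d \<le> dist x y"
    using separate_compact_closed[of K "- U"] KU by auto
  show "\<exists>d>0. \<forall>t. norm t < d \<longrightarrow> Tr (\<lambda>x. indicator A x *\<^sub>R c) t < ennreal e"
  proof (intro exI[of _ d] conjI allI impI d(1))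
    fix t :: 'a assume t: "norm t < d"
    define S1 where "S1 = {x. x + t \<in> A - K}"
    define S4 where "S4 = {x. x + t \<in> U - A}"
    have [measurable]: "S1 \<in> sets borel" "S4 \<in> sets borel" unfolding S1_def S4_def by measurable
    have pt: "ennreal \<bar>indicator A (x + t) *\<^sub>R c - indicator A x *\<^sub>R c\<bar> \<le>
      ennreal \<bar>c\<bar> * (indicator S1 x + indicator (U - A) x + indicator (A - K) x + indicator S4 x)" for x
    proof -
      have "x + t \<in> A \<Longrightarrow> x \<notin> A \<Longrightarrow> x \<in> S1 \<or> x \<in> U - A"
      proof -
        assume "x + t \<in> A" "x \<notin> A"
        moreover have "x + t \<in> K \<Longrightarrow> x \<in> U"
          using d(2) t by (metis ComplI dist_add_cancel2 dist_norm add_diff_cancel_left' diff_0 norm_minus_cancel not_le add.commute)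
        ultimately show ?thesis unfolding S1_def by auto
      qed
      moreover have "x \<in> A \<Longrightarrow> x + t \<notin> A \<Longrightarrow> x \<in> A - K \<or> x \<in> S4"
      proof -
        assume "x \<in> A" "x + t \<notin> A"
        moreover have "x \<in> K \<Longrightarrow> x + t \<in> U"
          using d(2) t by (metis ComplI dist_norm add_diff_cancel_left' not_le diff_add_cancel norm_minus_commute)
        ultimately show ?thesis unfolding S4_def by auto
      qed
      ultimately have "ennreal \<bar>indicator A (x + t) - indicator A x\<bar> \<le>
         (indicator S1 x + indicator (U - A) x + indicator (A - K) x + indicator S4 x)"
        by (cases "x \<in> A"; cases "x + t \<in> A") (auto simp: indicator_def)
      hence "ennreal \<bar>c\<bar> * ennreal \<bar>indicator A (x + t) - indicator A x\<bar> \<le>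
         ennreal \<bar>c\<bar> * (indicator S1 x + indicator (U - A) x + indicator (A - K) x + indicator S4 x)"
        by (rule mult_left_mono) auto
      moreover have "\<bar>indicator A (x + t) *\<^sub>R c - indicator A x *\<^sub>R c\<bar> = \<bar>c\<bar> * \<bar>indicator A (x + t) - indicator A x\<bar>"
        by (simp add: indicator_def)
      ultimately show ?thesis by (simp add: ennreal_mult)
    qed
    have "Tr (\<lambda>x. indicator A x *\<^sub>R c) t \<le> (\<integral>\<^sup>+x. ennreal \<bar>c\<bar> * (indicator S1 x + indicator (U - A) x + indicator (A - K) x + indicator S4 x) \<partial>lborel)"
      unfolding Tr_def by (intro nn_integral_mono pt)
    also have "\<dots> = ennreal \<bar>c\<bar> * (emeasure lborel S1 + emeasure lborel (U - A) + emeasure lborel (A - K) + emeasure lborel S4)"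
      by (subst nn_integral_cmult) (auto simp: nn_integral_add)
    also have "emeasure lborel S1 = emeasure lborel (A - K)" unfolding S1_def
      by (rule emeasure_lborel_translate) measurable
    also have "emeasure lborel S4 = emeasure lborel (U - A)" unfolding S4_def
      by (rule emeasure_lborel_translate) measurable
    also have "emeasure lborel (A - K) + emeasure lborel (U - A) + emeasure lborel (A - K) + emeasure lborel (U - A)
       \<le> ennreal e' + ennreal e' + ennreal e' + ennreal e'"
      using KU by (intro add_mono) auto
    also have "\<dots> = ennreal (4 * e')" using e' by (simp flip: ennreal_plus)
    also have "ennreal \<bar>c\<bar> * ennreal (4 * e') = ennreal (\<bar>c\<bar> * (4 * e'))"
      using e' by (simp add: ennreal_mult)
    finally have le: "Tr (\<lambda>x. indicator A x *\<^sub>R c) t \<le> ennreal (\<bar>c\<bar> * (4 * e'))"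
      by (simp add: mult_left_mono)
    have "\<bar>c\<bar> * (4 * e') < e"
      unfolding e'_def using e by (simp add: field_simps)
    hence "ennreal (\<bar>c\<bar> * (4 * e')) < ennreal e"
      using e e' by (subst ennreal_less_iff) auto
    with le show "Tr (\<lambda>x. indicator A x *\<^sub>R c) t < ennreal e" by order
  qed
qed


lemma Tr_triangle:
  fixes f g :: "'a::euclidean_space \<Rightarrow> real"
  assumes [measurable]: "f \<in> borel_measurable borel" "g \<in> borel_measurable borel"
  shows "Tr (\<lambda>x. f x + g x) t \<le> Tr f t + Tr g t"
proof -
  have "Tr (\<lambda>x. f x + g x) t \<le> (\<integral>\<^sup>+x. ennreal \<bar>f (x + t) - f x\<bar> + ennreal \<bar>g (x + t) - g x\<bar> \<partial>lborel)"
    unfolding Tr_def by (intro nn_integral_mono) (simp flip: ennreal_plus)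
  also have "\<dots> = Tr f t + Tr g t"
    unfolding Tr_def by (rule nn_integral_add) auto
  finally show ?thesis .
qed

lemma TC_add:
  fixes f g :: "'a::euclidean_space \<Rightarrow> real"
  assumes [measurable]: "f \<in> borel_measurable borel" "g \<in> borel_measurable borel"
    and "TC f" "TC g"
  shows "TC (\<lambda>x. f x + g x)"
  unfolding TC_def
proof (intro allI impI)
  fix e :: real assume e: "e > 0"
  obtain d1 where d1: "d1 > 0" "\<forall>t. norm t < d1 \<longrightarrow> Tr f t < ennreal (e/2)"
    using assms(3) e unfolding TC_def by (meson half_gt_zero)
  obtain d2 where d2: "d2 > 0" "\<forall>t. norm t < d2 \<longrightarrow> Tr g t < ennreal (e/2)"
    using assms(4) e unfolding TC_def by (meson half_gt_zero)
  show "\<exists>d>0. \<forall>t. norm t < d \<longrightarrow> Tr (\<lambda>x. f x + g x) t < ennreal e"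
  proof (intro exI[of _ "min d1 d2"] conjI allI impI)
    show "min d1 d2 > 0" using d1 d2 by simp
    fix t :: 'a assume "norm t < min d1 d2"
    hence "Tr f t < ennreal (e/2)" "Tr g t < ennreal (e/2)" using d1 d2 by auto
    hence "Tr f t + Tr g t < ennreal (e/2) + ennreal (e/2)" by (intro add_strict_mono)
    also have "\<dots> = ennreal e" using e by (simp flip: ennreal_plus)
    finally show "Tr (\<lambda>x. f x + g x) t < ennreal e"
      using Tr_triangle[of f g t] by simp
  qed
qed

lemma TC_lim:
  fixes f :: "'a::euclidean_space \<Rightarrow> real"
  assumes si: "\<And>i. integrable lborel (s i)" "\<And>i. TC (s i)"
    and lim: "\<And>x. (\<lambda>i. s i x) \<longlonglongrightarrow> f x"
    and bnd: "\<And>i x. norm (s i x) \<le> 2 * norm (f x)"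
    and f: "integrable lborel f"
  shows "TC f"
  unfolding TC_def
proof (intro allI impI)
  fix e :: real assume e: "e > 0"
  have fm[measurable]: "f \<in> borel_measurable borel" using f by auto
  have sm[measurable]: "s i \<in> borel_measurable borel" for i using si(1)[of i] by auto
  have "(\<lambda>i. (\<integral>\<^sup>+x. norm (f x - s i x) \<partial>lborel)) \<longlonglongrightarrow> 0"
  proof (rule nn_integral_dominated_convergence_norm[where w="\<lambda>x. 2 * norm (f x)"])
    show "(\<integral>\<^sup>+x. ennreal (2 * norm (f x)) \<partial>lborel) < \<infinity>"
    proof -
      have "(\<integral>\<^sup>+x. ennreal (2 * norm (f x)) \<partial>lborel) = 2 * (\<integral>\<^sup>+x. ennreal (norm (f x)) \<partial>lborel)"
        by (subst nn_integral_cmult[symmetric]) (auto simp: ennreal_mult)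
      also have "\<dots> < \<infinity>" using f unfolding integrable_iff_bounded by (simp add: ennreal_mult_less_top)
      finally show ?thesis .
    qed
  qed (use lim bnd in auto)
  then have "eventually (\<lambda>i. (\<integral>\<^sup>+x. norm (f x - s i x) \<partial>lborel) < ennreal (e/3)) sequentially"
    by (rule order_tendstoD(2)) (use e in simp)
  then obtain i where i: "(\<integral>\<^sup>+x. norm (f x - s i x) \<partial>lborel) < ennreal (e/3)"
    by (auto simp: eventually_sequentially)
  obtain d where d: "d > 0" "\<forall>t. norm t < d \<longrightarrow> Tr (s i) t < ennreal (e/3)"
    using si(2)[of i] e unfolding TC_def by (meson divide_pos_pos zero_less_numeral)
  show "\<exists>d>0. \<forall>t. norm t < d \<longrightarrow> Tr f t < ennreal e"
  proof (intro exI[of _ d] conjI allI impI d(1))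
    fix t :: 'a assume t: "norm t < d"
    have "Tr f t \<le> (\<integral>\<^sup>+x. ennreal \<bar>f (x + t) - s i (x + t)\<bar> + ennreal \<bar>s i (x + t) - s i x\<bar>
        + ennreal \<bar>f x - s i x\<bar> \<partial>lborel)"
      unfolding Tr_def by (intro nn_integral_mono) (simp flip: ennreal_plus)
    also have "\<dots> = (\<integral>\<^sup>+x. ennreal \<bar>f (x + t) - s i (x + t)\<bar> \<partial>lborel) + Tr (s i) t
        + (\<integral>\<^sup>+x. ennreal \<bar>f x - s i x\<bar> \<partial>lborel)"
      unfolding Tr_def by (simp add: nn_integral_add)
    also have "(\<integral>\<^sup>+x. ennreal \<bar>f (x + t) - s i (x + t)\<bar> \<partial>lborel) = (\<integral>\<^sup>+x. ennreal \<bar>f x - s i x\<bar> \<partial>lborel)"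
      by (rule nn_integral_lborel_translate[where u="\<lambda>x. ennreal \<bar>f x - s i x\<bar>"]) measurable
    also have "(\<integral>\<^sup>+x. ennreal \<bar>f x - s i x\<bar> \<partial>lborel) + Tr (s i) t + (\<integral>\<^sup>+x. ennreal \<bar>f x - s i x\<bar> \<partial>lborel)
       < ennreal (e/3) + ennreal (e/3) + ennreal (e/3)"
      using i d t by (intro add_strict_mono) auto
    also have "\<dots> = ennreal e" using e by (simp flip: ennreal_plus)
    finally show "Tr f t < ennreal e" .
  qed
qed

lemma TC_integrable:
  fixes f :: "'a::euclidean_space \<Rightarrow> real"
  assumes "integrable lborel f"
  shows "TC f"
  using assms
proof (induct rule: integrable_induct)
  case (base A c)
  then show ?case by (intro TC_indicator) auto
next
  case (add f g)
  then show ?case by (intro TC_add) auto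
next
  case (lim f s)
  then show ?case by (intro TC_lim[of s f]) auto
qed


lemma pdf_facts:
  fixes f :: "'a::euclidean_space \<Rightarrow> real"
  assumes "is_pdf f"
  shows "f \<in> borel_measurable borel" "\<And>x. 0 \<le> f x" "integrable lborel f"
    "(\<integral>x. f x \<partial>lborel) = 1"
proof -
  show m: "f \<in> borel_measurable borel" and nn: "\<And>x. 0 \<le> f x"
    using assms unfolding is_pdf_def by auto
  have one: "(\<integral>\<^sup>+ x. ennreal (f x) \<partial>lborel) = 1" using assms unfolding is_pdf_def by auto
  show "integrable lborel f" unfolding integrable_iff_bounded
    using m nn one by auto
  show "(\<integral>x. f x \<partial>lborel) = 1"
    using m nn one by (subst integral_eq_nn_integral) auto
qed

lemma nn_integral_lborel_affine:
  fixes u :: "'a::euclidean_space \<Rightarrow> ennreal"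
  assumes [measurable]: "u \<in> borel_measurable borel" and c: "c \<noteq> 0"
  shows "(\<integral>\<^sup>+x. u x \<partial>lborel) = ennreal (\<bar>c\<bar> ^ DIM('a)) * (\<integral>\<^sup>+x. u (t + c *\<^sub>R x) \<partial>lborel)"
  by (subst lborel_affine[OF c, of t])
     (simp add: nn_integral_density nn_integral_distr nn_integral_cmult)

lemma pdf_affine:
  fixes g :: "'a::euclidean_space \<Rightarrow> real"
  assumes g: "is_pdf g" and s: "s > 0"
  shows "is_pdf (\<lambda>x. s ^ DIM('a) * g (s *\<^sub>R (x - \<mu>)))"
proof -
  have [measurable]: "g \<in> borel_measurable borel" and nn: "\<And>x. 0 \<le> g x"
    using pdf_facts[OF g] by auto
  have "(\<integral>\<^sup>+ x. ennreal (s ^ DIM('a) * g (s *\<^sub>R (x - \<mu>))) \<partial>lborel)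
      = ennreal (\<bar>s\<bar> ^ DIM('a)) * (\<integral>\<^sup>+ x. ennreal (g ((- s *\<^sub>R \<mu>) + s *\<^sub>R x)) \<partial>lborel)"
    using s nn by (subst nn_integral_cmult[symmetric])
      (auto simp: ennreal_mult scaleR_diff_right intro!: nn_integral_cong)
  also have "\<dots> = (\<integral>\<^sup>+ x. ennreal (g x) \<partial>lborel)"
    using s by (subst nn_integral_lborel_affine[where c=s and t="- s *\<^sub>R \<mu>"]) auto
  also have "\<dots> = 1" using g unfolding is_pdf_def by auto
  finally show ?thesis unfolding is_pdf_def using s nn by auto
qed

lemma pdf_dilate:
  fixes g :: "'a::euclidean_space \<Rightarrow> real"
  assumes g: "is_pdf g" and k: "k > 0"
  shows "is_pdf (dilate k g)"
  using pdf_affine[OF g k, of 0] unfolding dilate_def[abs_def] by simp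

lemma abs_diff_integral_le:
  fixes u v :: "'b \<Rightarrow> real"
  assumes [measurable]: "u \<in> borel_measurable M" "v \<in> borel_measurable M"
  shows "ennreal \<bar>(\<integral>y. u y \<partial>M) - (\<integral>y. v y \<partial>M)\<bar> \<le> (\<integral>\<^sup>+y. ennreal \<bar>u y - v y\<bar> \<partial>M)"
proof (cases "integrable M u \<and> integrable M v")
  case True
  then have "\<bar>(\<integral>y. u y \<partial>M) - (\<integral>y. v y \<partial>M)\<bar> = \<bar>\<integral>y. u y - v y \<partial>M\<bar>" by simp
  also have "\<dots> \<le> (\<integral>y. \<bar>u y - v y\<bar> \<partial>M)" by (rule integral_abs_bound)
  finally have "ennreal \<bar>(\<integral>y. u y \<partial>M) - (\<integral>y. v y \<partial>M)\<bar> \<le> ennreal (\<integral>y. \<bar>u y - v y\<bar> \<partial>M)"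
    by (rule ennreal_leI)
  also have "\<dots> = (\<integral>\<^sup>+y. ennreal \<bar>u y - v y\<bar> \<partial>M)"
    using True by (subst nn_integral_eq_integral) auto
  finally show ?thesis .
next
  case False
  show ?thesis
  proof (cases "integrable M u \<or> integrable M v")
    case True
    have "\<not> integrable M (\<lambda>y. u y - v y)"
    proof
      assume i: "integrable M (\<lambda>y. u y - v y)"
      show False
      proof (cases "integrable M u")
        case True
        have "integrable M (\<lambda>y. u y - (u y - v y))" by (rule Bochner_Integration.integrable_diff[OF True i])
        moreover have "(\<lambda>y. u y - (u y - v y)) = v" by auto
        ultimately show False using True False by simp
      next
        case c: False
        then have iv: "integrable M v" using True by simp
        have "integrable M (\<lambda>y. v y + (u y - v y))" by (rule Bochner_Integration.integrable_add[OF iv i])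
        moreover have "(\<lambda>y. v y + (u y - v y)) = u" by auto
        ultimately show False using c by simp
      qed
    qed
    then have "(\<integral>\<^sup>+y. ennreal (norm (u y - v y)) \<partial>M) = \<infinity>"
      unfolding integrable_iff_bounded by (auto simp flip: top.not_eq_extremum)
    then show ?thesis by simp
  next
    case False
    then show ?thesis by (simp add: not_integrable_integral_eq)
  qed
qed


lemma conv_diff_bound:
  fixes G f :: "'a::euclidean_space \<Rightarrow> real" and \<psi> :: "'a \<Rightarrow> 'a"
  assumes [measurable]: "G \<in> borel_measurable borel" "f \<in> borel_measurable borel" "\<psi> \<in> borel_measurable borel"
    and fnn: "\<And>y. 0 \<le> f y"
  shows "(\<integral>\<^sup>+x. ennreal \<bar>conv G f x - (\<integral>y. G (x - \<psi> y) * f y \<partial>lborel)\<bar> \<partial>lborel)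
     \<le> (\<integral>\<^sup>+y. ennreal (f y) * Tr G (y - \<psi> y) \<partial>lborel)"
proof -
  have "(\<integral>\<^sup>+x. ennreal \<bar>conv G f x - (\<integral>y. G (x - \<psi> y) * f y \<partial>lborel)\<bar> \<partial>lborel)
     \<le> (\<integral>\<^sup>+x. (\<integral>\<^sup>+y. ennreal \<bar>G (x - y) * f y - G (x - \<psi> y) * f y\<bar> \<partial>lborel) \<partial>lborel)"
    unfolding conv_def by (intro nn_integral_mono abs_diff_integral_le) measurable
  also have "\<dots> = (\<integral>\<^sup>+y. (\<integral>\<^sup>+x. ennreal \<bar>G (x - y) * f y - G (x - \<psi> y) * f y\<bar> \<partial>lborel) \<partial>lborel)"
    by (rule lborel_pair.Fubini'[symmetric]) measurable
  also have "\<dots> = (\<integral>\<^sup>+y. ennreal (f y) * Tr G (y - \<psi> y) \<partial>lborel)"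
  proof (rule nn_integral_cong)
    fix y :: 'a
    have "(\<integral>\<^sup>+x. ennreal \<bar>G (x - y) * f y - G (x - \<psi> y) * f y\<bar> \<partial>lborel)
        = (\<integral>\<^sup>+x. ennreal (f y) * ennreal \<bar>G (x + - y) - G (x + - y + (y - \<psi> y))\<bar> \<partial>lborel)"
    proof (intro nn_integral_cong)
      fix x
      have "\<bar>G (x - y) * f y - G (x - \<psi> y) * f y\<bar> = f y * \<bar>G (x + - y) - G (x + - y + (y - \<psi> y))\<bar>"
        using fnn[of y] by (simp add: abs_mult left_diff_distrib[symmetric])
      then show "ennreal \<bar>G (x - y) * f y - G (x - \<psi> y) * f y\<bar> = ennreal (f y) * ennreal \<bar>G (x + - y) - G (x + - y + (y - \<psi> y))\<bar>"
        using fnn[of y] by (simp add: ennreal_mult)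
    qed
    also have "\<dots> = ennreal (f y) * (\<integral>\<^sup>+x. ennreal \<bar>G (x + - y) - G (x + - y + (y - \<psi> y))\<bar> \<partial>lborel)"
      by (rule nn_integral_cmult) measurable
    also have "(\<integral>\<^sup>+x. ennreal \<bar>G (x + - y) - G (x + - y + (y - \<psi> y))\<bar> \<partial>lborel)
       = (\<integral>\<^sup>+x. ennreal \<bar>G x - G (x + (y - \<psi> y))\<bar> \<partial>lborel)"
      by (rule nn_integral_lborel_translate[where u="\<lambda>x. ennreal \<bar>G x - G (x + (y - \<psi> y))\<bar>"]) measurable
    also have "\<dots> = Tr G (y - \<psi> y)" unfolding Tr_def by (simp add: abs_minus_commute)
    finally show "(\<integral>\<^sup>+x. ennreal \<bar>G (x - y) * f y - G (x - \<psi> y) * f y\<bar> \<partial>lborel) = ennreal (f y) * Tr G (y - \<psi> y)" .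
  qed
  finally show ?thesis .
qed


lemma conv_integrable:
  fixes G f :: "'a::euclidean_space \<Rightarrow> real"
  assumes G: "is_pdf G" and f: "is_pdf f"
  shows "integrable lborel (conv G f)"
proof -
  have [measurable]: "G \<in> borel_measurable borel" "f \<in> borel_measurable borel"
    using pdf_facts G f by auto
  have Gnn: "\<And>x. 0 \<le> G x" and fnn: "\<And>x. 0 \<le> f x" using pdf_facts G f by auto
  have m: "conv G f \<in> borel_measurable borel" unfolding conv_def by measurable
  have "(\<integral>\<^sup>+x. ennreal (norm (conv G f x)) \<partial>lborel)
      \<le> (\<integral>\<^sup>+x. (\<integral>\<^sup>+y. ennreal \<bar>G (x - y) * f y - 0\<bar> \<partial>lborel) \<partial>lborel)"
  proof (intro nn_integral_mono)
    fix x
    have "ennreal \<bar>(\<integral>y. G (x - y) * f y \<partial>lborel) - (\<integral>y. (0::real) \<partial>(lborel::'a measure))\<bar>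
       \<le> (\<integral>\<^sup>+y. ennreal \<bar>G (x - y) * f y - 0\<bar> \<partial>lborel)"
      by (rule abs_diff_integral_le[where u="\<lambda>y. G (x - y) * f y" and v="\<lambda>y. 0" and M=lborel]) measurable
    then show "ennreal (norm (conv G f x)) \<le> (\<integral>\<^sup>+y. ennreal \<bar>G (x - y) * f y - 0\<bar> \<partial>lborel)"
      unfolding conv_def by simp
  qed
  also have "\<dots> = (\<integral>\<^sup>+y. (\<integral>\<^sup>+x. ennreal \<bar>G (x - y) * f y - 0\<bar> \<partial>lborel) \<partial>lborel)"
    by (rule lborel_pair.Fubini'[symmetric]) measurable
  also have "\<dots> = (\<integral>\<^sup>+y. ennreal (f y) \<partial>lborel)"
  proof (rule nn_integral_cong)
    fix y :: 'a
    have "(\<integral>\<^sup>+x. ennreal \<bar>G (x - y) * f y - 0\<bar> \<partial>lborel) = (\<integral>\<^sup>+x. ennreal (f y) * ennreal (G (x + - y)) \<partial>lborel)"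
      using fnn Gnn by (intro nn_integral_cong) (simp add: ennreal_mult abs_mult mult.commute)
    also have "\<dots> = ennreal (f y) * (\<integral>\<^sup>+x. ennreal (G (x + - y)) \<partial>lborel)"
      by (rule nn_integral_cmult) measurable
    also have "(\<integral>\<^sup>+x. ennreal (G (x + - y)) \<partial>lborel) = (\<integral>\<^sup>+x. ennreal (G x) \<partial>lborel)"
      by (rule nn_integral_lborel_translate[where u="\<lambda>x. ennreal (G x)"]) measurable
    also have "\<dots> = 1" using G unfolding is_pdf_def by auto
    finally show "(\<integral>\<^sup>+x. ennreal \<bar>G (x - y) * f y - 0\<bar> \<partial>lborel) = ennreal (f y)" by simp
  qed
  also have "\<dots> = 1" using f unfolding is_pdf_def by auto
  finally have "(\<integral>\<^sup>+x. ennreal (norm (conv G f x)) \<partial>lborel) < \<infinity>"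
    by (rule le_less_trans) simp
  then show ?thesis unfolding integrable_iff_bounded using m by auto
qed

lemma mixture_integrable:
  fixes g :: "'a::euclidean_space \<Rightarrow> real"
  assumes g: "is_pdf g" and h: "h \<in> mixtures g"
  shows "integrable lborel h"
proof -
  obtain m :: nat and c \<sigma> \<mu> where hdef: "h = (\<lambda>x. \<Sum>i<m. c i * inverse (\<sigma> i) ^ DIM('a) * g (inverse (\<sigma> i) *\<^sub>R (x - \<mu> i)))"
    and pos: "\<forall>i<m. 0 < \<sigma> i \<and> 0 \<le> c i"
  proof -
    from h obtain m where "h \<in> mixtures_m m g" unfolding mixtures_def by auto
    then obtain c \<sigma> \<mu> where hh: "h = (\<lambda>x. \<Sum>i<m. c i * inverse (\<sigma> i) ^ DIM('a) * g (inverse (\<sigma> i) *\<^sub>R (x - \<mu> i)))"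
      "\<forall>i<m. 0 < \<sigma> i \<and> 0 \<le> c i"
      unfolding mixtures_m_def by blast
    show ?thesis by (rule that[of c \<sigma> \<mu> m, OF hh])
  qed
  have "integrable lborel (\<lambda>x. c i * (inverse (\<sigma> i) ^ DIM('a) * g (inverse (\<sigma> i) *\<^sub>R (x - \<mu> i))))"
    if "i < m" for i
    using pos that by (intro Bochner_Integration.integrable_mult_right pdf_facts(3)[OF pdf_affine[OF g]]) auto
  then show ?thesis unfolding hdef
    by (intro Bochner_Integration.integrable_sum) (simp add: mult.assoc)
qed


lemma ennreal_tendsto_0I:
  fixes X :: "nat \<Rightarrow> ennreal"
  assumes "\<And>e. e > 0 \<Longrightarrow> eventually (\<lambda>i. X i < ennreal e) sequentially"
  shows "X \<longlonglongrightarrow> 0"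
proof (rule order_tendstoI)
  fix a :: ennreal assume "a < 0" thus "eventually (\<lambda>i. a < X i) sequentially" by simp
next
  fix a :: ennreal assume a: "0 < a"
  obtain b where b: "0 < b" "b < a" using dense[OF a] by blast
  have bt: "b < top" using b(2) by (rule less_le_trans) simp
  define e where "e = enn2real b"
  have e: "e > 0" "ennreal e = b" unfolding e_def using b bt
    by (auto simp: enn2real_positive_iff)
  have "eventually (\<lambda>i. X i < ennreal e) sequentially" using assms e by auto
  then show "eventually (\<lambda>i. X i < a) sequentially"
    by eventually_elim (use e b in auto)
qed

lemma approx_part:
  fixes f g :: "'a::euclidean_space \<Rightarrow> real"
  assumes f: "is_pdf f" and g: "is_pdf g" and k: "k > 0"
  shows "\<exists>hs :: nat \<Rightarrow> 'a \<Rightarrow> real. (\<forall>m. hs m \<in> mixtures g) \<and>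
          (\<lambda>m. \<integral> x. \<bar>conv (dilate k g) f x - hs m x\<bar> \<partial>lborel) \<longlonglongrightarrow> 0"
proof -
  define G where "G = dilate k g"
  have Gp: "is_pdf G" unfolding G_def by (rule pdf_dilate[OF g k])
  have [measurable]: "G \<in> borel_measurable borel" "f \<in> borel_measurable borel"
    using pdf_facts Gp f by auto
  have Gnn: "\<And>x. 0 \<le> G x" and fnn: "\<And>x. 0 \<le> f x" using pdf_facts Gp f by auto
  have fint: "integrable lborel f" and f1: "(\<integral>x. f x \<partial>lborel) = 1" using pdf_facts f by auto
  have TCG: "TC G" by (rule TC_integrable[OF pdf_facts(3)[OF Gp]])
  have "id \<in> borel_measurable (lborel :: 'a measure)" by simp
  from borel_measurable_implies_sequence_metric[OF this, of 0]
  obtain \<phi> :: "nat \<Rightarrow> 'a \<Rightarrow> 'a" where \<phi>s: "\<And>i. simple_function lborel (\<phi> i)"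
    and \<phi>lim: "\<And>y. (\<lambda>i. \<phi> i y) \<longlonglongrightarrow> y" by auto
  have \<phi>m[measurable]: "\<phi> i \<in> borel_measurable borel" for i
    using borel_measurable_simple_function[OF \<phi>s[of i]] by simp
  have fin: "finite (range (\<phi> i))" for i using simple_functionD(1)[OF \<phi>s[of i]] by simp
  define w where "w i v = (\<integral>y. f y * indicator {y. \<phi> i y = v} y \<partial>lborel)" for i v
  define hs where "hs i x = (\<Sum>v\<in>range (\<phi> i). w i v * G (x - v))" for i x
  have wint: "integrable lborel (\<lambda>y. f y * indicator {y. \<phi> i y = v} y)" for i v
    by (rule integrable_real_mult_indicator[OF _ fint]) measurable
  have hs_eq: "hs i x = (\<integral>y. G (x - \<phi> i y) * f y \<partial>lborel)" for i x
  proof -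
    have "(\<integral>y. G (x - \<phi> i y) * f y \<partial>lborel)
       = (\<integral>y. (\<Sum>v\<in>range (\<phi> i). G (x - v) * (f y * indicator {y. \<phi> i y = v} y)) \<partial>lborel)"
    proof (rule Bochner_Integration.integral_cong[OF refl])
      fix y
      have "(\<Sum>v\<in>range (\<phi> i). G (x - v) * (f y * indicator {y. \<phi> i y = v} y))
          = (\<Sum>v\<in>range (\<phi> i). if v = \<phi> i y then G (x - v) * f y else 0)"
        by (rule sum.cong) (auto simp: indicator_def)
      also have "\<dots> = G (x - \<phi> i y) * f y"
        using sum.delta[OF fin[of i], of "\<phi> i y" "\<lambda>v. G (x - v) * f y"] by simp
      finally show "G (x - \<phi> i y) * f y = (\<Sum>v\<in>range (\<phi> i). G (x - v) * (f y * indicator {y. \<phi> i y = v} y))" by simp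
    qed
    also have "\<dots> = (\<Sum>v\<in>range (\<phi> i). (\<integral>y. G (x - v) * (f y * indicator {y. \<phi> i y = v} y) \<partial>lborel))"
      by (rule Bochner_Integration.integral_sum) (intro Bochner_Integration.integrable_mult_right wint)
    also have "\<dots> = hs i x" unfolding hs_def w_def by (simp add: mult.commute)
    finally show ?thesis by simp
  qed
  have w_nn: "w i v \<ge> 0" for i v unfolding w_def by (rule Bochner_Integration.integral_nonneg) (auto simp: fnn)
  have w_sum: "(\<Sum>v\<in>range (\<phi> i). w i v) = 1" for i
  proof -
    have "(\<Sum>v\<in>range (\<phi> i). w i v) = (\<integral>y. (\<Sum>v\<in>range (\<phi> i). f y * indicator {y. \<phi> i y = v} y) \<partial>lborel)"
      unfolding w_def by (rule Bochner_Integration.integral_sum[symmetric]) (rule wint)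
    also have "\<dots> = (\<integral>y. f y \<partial>lborel)"
    proof (rule Bochner_Integration.integral_cong[OF refl])
      fix y
      have "(\<Sum>v\<in>range (\<phi> i). f y * indicator {y. \<phi> i y = v} y) = (\<Sum>v\<in>range (\<phi> i). if v = \<phi> i y then f y else 0)"
        by (rule sum.cong) (auto simp: indicator_def)
      also have "\<dots> = f y" using sum.delta[OF fin[of i], of "\<phi> i y" "\<lambda>v. f y"] by simp
      finally show "(\<Sum>v\<in>range (\<phi> i). f y * indicator {y. \<phi> i y = v} y) = f y" .
    qed
    finally show ?thesis using f1 by simp
  qed
  have hs_mix: "hs i \<in> mixtures g" for i
  proof -
    let ?R = "range (\<phi> i)"
    obtain e where e: "bij_betw e {0..<card ?R} ?R" using ex_bij_betw_nat_finite[OF fin[of i]] by blast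
    have eq: "hs i = (\<lambda>x. \<Sum>j<card ?R. w i (e j) * inverse (1/k) ^ DIM('a) * g (inverse (1/k) *\<^sub>R (x - e j)))"
    proof
      fix x
      have "hs i x = (\<Sum>j\<in>{0..<card ?R}. w i (e j) * G (x - e j))"
        unfolding hs_def by (rule sum.reindex_bij_betw[OF e, symmetric])
      also have "\<dots> = (\<Sum>j<card ?R. w i (e j) * inverse (1/k) ^ DIM('a) * g (inverse (1/k) *\<^sub>R (x - e j)))"
        unfolding G_def dilate_def by (simp add: atLeast0LessThan mult.assoc)
      finally show "hs i x = \<dots>" .
    qed
    have s1: "(\<Sum>j<card ?R. w i (e j)) = 1"
      using sum.reindex_bij_betw[OF e, of "w i"] w_sum[of i] by (simp add: atLeast0LessThan)
    have "hs i \<in> mixtures_m (card ?R) g"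
      unfolding mixtures_m_def mem_Collect_eq
      by (rule exI[of _ "\<lambda>j. w i (e j)"], rule exI[of _ "\<lambda>j. 1/k"], rule exI[of _ e])
         (use eq s1 w_nn k in auto)
    then show ?thesis unfolding mixtures_def by blast
  qed
  have Trm[measurable]: "Tr G \<in> borel_measurable borel" unfolding Tr_def[abs_def] by measurable
  have Tr_le: "Tr G t \<le> 2" for t
  proof -
    have "Tr G t \<le> (\<integral>\<^sup>+x. ennreal (G (x + t)) + ennreal (G x) \<partial>lborel)"
      unfolding Tr_def
    proof (intro nn_integral_mono)
      fix x
      have "\<bar>G (x + t) - G x\<bar> \<le> G (x + t) + G x" using Gnn[of x] Gnn[of "x + t"] by linarith
      then show "ennreal \<bar>G (x + t) - G x\<bar> \<le> ennreal (G (x + t)) + ennreal (G x)"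
        using Gnn[of x] Gnn[of "x + t"] by (simp flip: ennreal_plus add: ennreal_leI)
    qed
    also have "\<dots> = (\<integral>\<^sup>+x. ennreal (G (x + t)) \<partial>lborel) + (\<integral>\<^sup>+x. ennreal (G x) \<partial>lborel)"
      by (rule nn_integral_add) auto
    also have "(\<integral>\<^sup>+x. ennreal (G (x + t)) \<partial>lborel) = (\<integral>\<^sup>+x. ennreal (G x) \<partial>lborel)"
      by (rule nn_integral_lborel_translate[where u="\<lambda>x. ennreal (G x)"]) measurable
    also have "(\<integral>\<^sup>+x. ennreal (G x) \<partial>lborel) = 1" using Gp unfolding is_pdf_def by auto
    finally show ?thesis by simp
  qed
  have lim0: "(\<lambda>i. Tr G (y - \<phi> i y)) \<longlonglongrightarrow> 0" for y
  proof (rule ennreal_tendsto_0I)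
    fix e :: real assume e: "e > 0"
    obtain d where d: "d > 0" "\<forall>t. norm t < d \<longrightarrow> Tr G t < ennreal e"
      using TCG e unfolding TC_def by blast
    have "eventually (\<lambda>i. dist (\<phi> i y) y < d) sequentially"
      using \<phi>lim[of y] d(1) by (rule tendstoD)
    then show "eventually (\<lambda>i. Tr G (y - \<phi> i y) < ennreal e) sequentially"
      by eventually_elim (use d in \<open>auto simp: dist_norm norm_minus_commute\<close>)
  qed
  define B where "B i = (\<integral>\<^sup>+y. ennreal (f y) * Tr G (y - \<phi> i y) \<partial>lborel)" for i
  have B0: "B \<longlonglongrightarrow> 0"
  proof -
    have "(\<lambda>i. B i) \<longlonglongrightarrow> (\<integral>\<^sup>+y. 0 \<partial>(lborel::'a measure))"
      unfolding B_def
    proof (rule nn_integral_dominated_convergence[where w="\<lambda>y. 2 * ennreal (f y)"])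
      show "AE y in lborel. ennreal (f y) * Tr G (y - \<phi> j y) \<le> 2 * ennreal (f y)" for j
        using Tr_le by (auto simp: mult.commute intro!: mult_left_mono)
      have "(\<integral>\<^sup>+y. 2 * ennreal (f y) \<partial>lborel) = 2 * (\<integral>\<^sup>+y. ennreal (f y) \<partial>lborel)"
        by (rule nn_integral_cmult) auto
      also have "\<dots> = 2" using f unfolding is_pdf_def by simp
      finally show "(\<integral>\<^sup>+y. 2 * ennreal (f y) \<partial>lborel) < \<infinity>" by simp
      show "AE y in lborel. (\<lambda>i. ennreal (f y) * Tr G (y - \<phi> i y)) \<longlonglongrightarrow> 0"
      proof (intro AE_I2)
        fix y
        have "(\<lambda>i. ennreal (f y) * Tr G (y - \<phi> i y)) \<longlonglongrightarrow> ennreal (f y) * 0"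
          by (rule tendsto_mult_ennreal[OF tendsto_const lim0]) simp
        then show "(\<lambda>i. ennreal (f y) * Tr G (y - \<phi> i y)) \<longlonglongrightarrow> 0" by simp
      qed
    qed measurable
    then show ?thesis by simp
  qed
  define L where "L i = (\<integral>\<^sup>+x. ennreal \<bar>conv G f x - hs i x\<bar> \<partial>lborel)" for i
  have LB: "L i \<le> B i" for i
    using conv_diff_bound[of G f "\<phi> i"] fnn unfolding L_def B_def hs_eq by simp
  have L0: "L \<longlonglongrightarrow> 0"
    by (rule tendsto_sandwich[of "\<lambda>_. 0" L sequentially B]) (use LB B0 in auto)
  have convm[measurable]: "conv G f \<in> borel_measurable borel"
    using conv_integrable[OF Gp f] by auto
  have hsm[measurable]: "hs i \<in> borel_measurable borel" for i
    unfolding hs_def[abs_def] by measurable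
  have E: "(\<integral>x. \<bar>conv G f x - hs i x\<bar> \<partial>lborel) = enn2real (L i)" for i
    unfolding L_def by (rule integral_eq_nn_integral) auto
  have "(\<lambda>i. enn2real (L i)) \<longlonglongrightarrow> 0"
    by (rule tendsto_enn2real) (use L0 in auto)
  then show ?thesis using hs_mix E unfolding G_def[symmetric] by (intro exI[of _ hs]) auto
qed


theorem lemma5:
  fixes f g :: "'a::euclidean_space \<Rightarrow> real"
  assumes "is_pdf f" and "is_pdf g"
  shows "(\<forall>h\<in>mixtures g. integrable lborel h)
    \<and> (\<forall>k>0. integrable lborel (conv (dilate k g) f))
    \<and> (\<forall>k>0. \<exists>hs :: nat \<Rightarrow> 'a \<Rightarrow> real. (\<forall>m. hs m \<in> mixtures g) \<and>
          (\<lambda>m. \<integral> x. \<bar>conv (dilate k g) f x - hs m x\<bar> \<partial>lborel) \<longlonglongrightarrow> 0)"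
  using mixture_integrable[OF assms(2)] conv_integrable[OF pdf_dilate[OF assms(2)] assms(1)]
    approx_part[OF assms(1) assms(2)] by blast

end
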